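(* Let $0<\delta\leqslant 2^{-20}$, let $\xi$ be a real number with $\inf_{n\in\mathbb{N}}n\|n\xi\|\geqslant\delta$, and let $\alpha_1,\alpha_2,\beta_1,\beta_2\in[0,1]$ with $\alpha_1+\beta_1=\alpha_2+\beta_2=1$ and $\alpha_1=\max\{\alpha_1,\alpha_2\}$. Let $q$ be a positive integer, $q_1=\left[\frac{q^2}{\delta}\log\frac{q^2}{\delta}\right]+1$ and $q_2=\left[\frac{q_1^2}{\delta}\log\frac{q_1^2}{\delta}\right]+1$. If $$\mu(B_{q_1})\geqslant\frac{\mu(B_q)}{2}>0,$$ then $$\mu(B_{q_2})\geqslant\frac{\mu(B_{q_1})}{2}.$$
   Context: $\|t\|$ is the distance to the nearest integer, $\log$ the natural logarithm, $[\cdot]$ the integer part, $\mu$ Lebesgue measure. For $\alpha\in[0,1]$, integers $x\geqslant1$ and $0\leqslant y\leqslant x$ let $E_\alpha(x,y)=\big(\frac{y}{x}-\frac{\delta}{x^{1+\alpha}(\log(x+1))^\alpha},\ \frac{y}{x}+\frac{\delta}{x^{1+\alpha}(\log(x+1))^\alpha}\big)$ and $E_\alpha(x)=\bigcup_{y=0}^x E_\alpha(x,y)\cap[0,1]$. Let $l(x,\alpha)=\left[\log\big(x^{1+\alpha}(\log(x+1))^\alpha/(2\delta)\big)/\log 2\right]$. Let $A^c_\alpha(x)$ be the union of all closed dyadic intervals $[a/2^{l(x,\alpha)},(a+1)/2^{l(x,\alpha)}]\subseteq[0,1]$, $a\in\mathbb{Z}$, whose interior is disjoint from $E_\alpha(x)$,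 and $A_\alpha(x)=[0,1]\setminus A^c_\alpha(x)$ (so $A_\alpha(x)$ is the smallest union of dyadic intervals of length $2^{-l(x,\alpha)}$ covering $E_\alpha(x)$). For $\beta\in[0,1]$ and $q\geqslant1$ let $K^{(\beta)}_\xi(0,q)=\{x\in\mathbb{N}:\ 0<x\leqslant q,\ \|x\xi\|\leqslant\delta/(x\log(x+1))^\beta\}$, and $$B_q=\Big(\bigcap_{x\in K^{(\beta_1)}_\xi(0,q)}A^c_{\alpha_1}(x)\Big)\cap\Big(\bigcap_{x\in K^{(\beta_2)}_\xi(0,q)}A^c_{\alpha_2}(x)\Big)$$ (intersections over an empty index set being $[0,1]$). *)

theory Defs
  imports "HOL-Analysis.Analysis"
begin

definition dnint :: "real \<Rightarrow> real" where
  "dnint t = \<bar>t - of_int (round t)\<bar>"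

definition Erad :: "real \<Rightarrow> real \<Rightarrow> nat \<Rightarrow> real" where
  "Erad \<delta> \<alpha> x = \<delta> / (real x powr (1 + \<alpha>) * ln (real x + 1) powr \<alpha>)"

definition Eint :: "real \<Rightarrow> real \<Rightarrow> nat \<Rightarrow> nat \<Rightarrow> real set" where
  "Eint \<delta> \<alpha> x y = {real y / real x - Erad \<delta> \<alpha> x <..< real y / real x + Erad \<delta> \<alpha> x}"

definition Eset :: "real \<Rightarrow> real \<Rightarrow> nat \<Rightarrow> real set" where
  "Eset \<delta> \<alpha> x = (\<Union>y\<in>{0..x}. Eint \<delta> \<alpha> x y) \<inter> {0..1}"

definition lexp :: "real \<Rightarrow> real \<Rightarrow> nat \<Rightarrow> int" where
  "lexp \<delta> \<alpha> x = \<lfloor>ln (real x powr (1 + \<alpha>) * ln (real x + 1) powr \<alpha> / (2 * \<delta>)) / ln 2\<rfloor>"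

definition dyad :: "int \<Rightarrow> int \<Rightarrow> real set" where
  "dyad l a = {real_of_int a / 2 powr real_of_int l .. (real_of_int a + 1) / 2 powr real_of_int l}"

definition dyad_int :: "int \<Rightarrow> int \<Rightarrow> real set" where
  "dyad_int l a = {real_of_int a / 2 powr real_of_int l <..< (real_of_int a + 1) / 2 powr real_of_int l}"

definition Acomp :: "real \<Rightarrow> real \<Rightarrow> nat \<Rightarrow> real set" where
  "Acomp \<delta> \<alpha> x = \<Union>{dyad (lexp \<delta> \<alpha> x) a | a.
        dyad (lexp \<delta> \<alpha> x) a \<subseteq> {0..1} \<and> dyad_int (lexp \<delta> \<alpha> x) a \<inter> Eset \<delta> \<alpha> x = {}}"

definition Kset :: "real \<Rightarrow> real \<Rightarrow> real \<Rightarrow> nat \<Rightarrow> nat set" where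
  "Kset \<delta> \<xi> \<beta> q = {x. 0 < x \<and> x \<le> q \<and>
      dnint (real x * \<xi>) \<le> \<delta> / (real x * ln (real x + 1)) powr \<beta>}"

text \<open>B_q (empty intersections are [0,1], hence the intersection with [0,1]).\<close>
definition Bset :: "real \<Rightarrow> real \<Rightarrow> real \<Rightarrow> real \<Rightarrow> real \<Rightarrow> real \<Rightarrow> nat \<Rightarrow> real set" where
  "Bset \<delta> \<xi> \<alpha>1 \<beta>1 \<alpha>2 \<beta>2 q =
     {0..1} \<inter> (\<Inter>x\<in>Kset \<delta> \<xi> \<beta>1 q. Acomp \<delta> \<alpha>1 x) \<inter> (\<Inter>x\<in>Kset \<delta> \<xi> \<beta>2 q. Acomp \<delta> \<alpha>2 x)"

definition qnext :: "real \<Rightarrow> nat \<Rightarrow> nat" where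
  "qnext \<delta> q = nat \<lfloor>(real q ^ 2 / \<delta>) * ln (real q ^ 2 / \<delta>)\<rfloor> + 1"

end

theory Submission
  imports Defs
begin



definition Qv :: "real \<Rightarrow> real \<Rightarrow> nat \<Rightarrow> real" where
  "Qv \<delta> \<alpha> x = real x powr (1 + \<alpha>) * ln (real x + 1) powr \<alpha> / (2 * \<delta>)"

lemma ln_pow_ge_half:
  assumes "0 \<le> \<alpha>" "\<alpha> \<le> 1" "1 \<le> x"
  shows "ln (real x + 1) powr \<alpha> \<ge> 1/2"
proof -
  have l2: "ln 2 > (1/2::real)" using ln_2_less_1 ln2_ge_two_thirds by auto
  have "ln (real x + 1) \<ge> ln 2" using assms by simp
  hence b: "ln (real x + 1) > 1/2" using l2 by linarith
  show ?thesis
  proof (cases "ln (real x + 1) \<ge> 1")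
    case True
    then show ?thesis using assms ge_one_powr_ge_zero[of "ln (real x + 1)" \<alpha>] by linarith
  next
    case False
    then have "ln (real x + 1) powr 1 \<le> ln (real x + 1) powr \<alpha>"
      using assms b by (intro powr_mono') auto
    then show ?thesis using b by simp
  qed
qed

lemma Qv_ge:
  assumes "0 < \<delta>" "\<delta> \<le> 1/4" "0 \<le> \<alpha>" "\<alpha> \<le> 1" "1 \<le> x"
  shows "Qv \<delta> \<alpha> x \<ge> 1"
proof -
  have a: "real x powr (1 + \<alpha>) \<ge> 1" using assms by (intro ge_one_powr_ge_zero) auto
  have b: "ln (real x + 1) powr \<alpha> \<ge> 1/2" using ln_pow_ge_half assms by auto
  have "real x powr (1 + \<alpha>) * ln (real x + 1) powr \<alpha> \<ge> 1 * (1/2)"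
    using a b by (intro mult_mono) auto
  then show ?thesis using assms unfolding Qv_def by (simp add: field_simps)
qed

lemma Erad_pos:
  assumes "0 < \<delta>" "1 \<le> x"
  shows "Erad \<delta> \<alpha> x > 0"
  using assms unfolding Erad_def by (auto intro!: divide_pos_pos mult_pos_pos)

lemma Qv_Erad:
  assumes "0 < \<delta>" "1 \<le> x"
  shows "Qv \<delta> \<alpha> x = 1 / (2 * Erad \<delta> \<alpha> x)"
  using assms unfolding Qv_def Erad_def by (simp add: field_simps)

lemma lexp_props:
  assumes "0 < \<delta>" "\<delta> \<le> 1/4" "0 \<le> \<alpha>" "\<alpha> \<le> 1" "1 \<le> x"
  shows "0 \<le> lexp \<delta> \<alpha> x" "2 powr (lexp \<delta> \<alpha> x) \<le> Qv \<delta> \<alpha> x"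
        "Qv \<delta> \<alpha> x < 2 powr (lexp \<delta> \<alpha> x + 1)"
proof -
  define Q where "Q = Qv \<delta> \<alpha> x"
  have Q1: "Q \<ge> 1" using Qv_ge assms Q_def by auto
  define z where "z = ln Q / ln 2"
  have lz: "lexp \<delta> \<alpha> x = \<lfloor>z\<rfloor>" unfolding lexp_def z_def Q_def Qv_def by simp
  have z0: "z \<ge> 0" using Q1 unfolding z_def by auto
  have pz: "2 powr z = Q" using Q1 unfolding z_def powr_def by simp
  show "0 \<le> lexp \<delta> \<alpha> x" using lz z0 by simp
  show "2 powr (lexp \<delta> \<alpha> x) \<le> Qv \<delta> \<alpha> x"
    using lz pz Q_def by (metis floor_le_iff le_add_same_cancel2 order.refl powr_mono one_le_numeral dual_order.refl of_int_floor_le)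
  show "Qv \<delta> \<alpha> x < 2 powr (lexp \<delta> \<alpha> x + 1)"
    using lz pz Q_def by (metis powr_less_cancel_iff one_less_numeral_iff semiring_norm(76) of_int_1 of_int_add real_of_int_floor_add_one_gt)
qed




lemma A_cover:
  assumes "0 < \<delta>" "\<delta> \<le> 1/4" "0 \<le> \<alpha>" "\<alpha> \<le> 1" "1 \<le> x"
    and t: "t \<in> {0..1}" "t \<notin> Acomp \<delta> \<alpha> x"
  shows "\<exists>y\<in>{0..x}. \<bar>t - real y / real x\<bar> < 5 * Erad \<delta> \<alpha> x"
proof -
  define l where "l = lexp \<delta> \<alpha> x"
  define R where "R = Erad \<delta> \<alpha> x"
  have R0: "R > 0" using Erad_pos assms R_def by auto
  have l0: "0 \<le> l" and lQ: "Qv \<delta> \<alpha> x < 2 powr (l + 1)"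
    using lexp_props[OF assms(1-5)] l_def by auto
  define N :: nat where "N = 2 ^ nat l"
  have PN: "2 powr (real_of_int l) = real N"
    using l0 unfolding N_def by (simp add: powr_realpow[symmetric])
  have N1: "N \<ge> 1" unfolding N_def by simp
  have "Qv \<delta> \<alpha> x < 2 * real N" using lQ PN by (simp add: powr_add)
  hence NR: "1 / real N < 4 * R" using Qv_Erad[OF assms(1,5)] R_def R0 N1
    by (simp add: field_simps)
  define a :: int where "a = (if t = 1 then int N - 1 else \<lfloor>t * real N\<rfloor>)"
  have a1: "real_of_int a \<le> t * real N" and a2: "t * real N \<le> real_of_int a + 1"
    and a3: "0 \<le> a" and a4: "a + 1 \<le> int N"
  proof -
    show "real_of_int a \<le> t * real N"
      using t N1 unfolding a_def by (auto simp: of_nat_diff)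
    show "t * real N \<le> real_of_int a + 1"
      using t N1 unfolding a_def by auto
    show "0 \<le> a" using t N1 unfolding a_def by auto
    show "a + 1 \<le> int N"
    proof (cases "t = 1")
      case True then show ?thesis unfolding a_def by simp
    next
      case False
      then have "t * real N < real N" using t N1 by auto
      then have "\<lfloor>t * real N\<rfloor> < int N" by (simp add: floor_less_iff)
      then show ?thesis using False unfolding a_def by simp
    qed
  qed
  have Npos: "real N > 0" using N1 by simp
  have tin: "t \<in> dyad l a" unfolding dyad_def PN using a1 a2 Npos
    by (auto simp: field_simps)
  have sub: "dyad l a \<subseteq> {0..1}" unfolding dyad_def PN using a3 a4 Npos
    by (auto simp: field_simps)
  have "dyad_int l a \<inter> Eset \<delta> \<alpha> x \<noteq> {}"
  proof
    assume "dyad_int l a \<inter> Eset \<delta> \<alpha> x = {}"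
    then have "t \<in> Acomp \<delta> \<alpha> x" unfolding Acomp_def l_def[symmetric]
      using tin sub by blast
    then show False using t by simp
  qed
  then obtain e where e1: "e \<in> dyad_int l a" and e2: "e \<in> Eset \<delta> \<alpha> x" by blast
  from e2 obtain y where y: "y \<in> {0..x}" "e \<in> Eint \<delta> \<alpha> x y" unfolding Eset_def by auto
  have ey: "\<bar>e - real y / real x\<bar> < R" using y(2) unfolding Eint_def R_def by auto
  have "real_of_int a / real N < e" "e < (real_of_int a + 1) / real N"
    using e1 unfolding dyad_int_def PN by auto
  moreover have "real_of_int a / real N \<le> t" "t \<le> (real_of_int a + 1) / real N"
    using tin unfolding dyad_def PN by auto
  ultimately have "\<bar>t - e\<bar> \<le> 1 / real N" by (simp add: add_divide_distrib abs_le_iff)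
  then have "\<bar>t - real y / real x\<bar> < 5 * R" using ey NR by linarith
  then show ?thesis using y R_def by blast
qed




lemma cell_in_dyad:
  fixes l :: int and m :: nat and a b :: int
  assumes "0 \<le> l" "l \<le> int m" "t \<in> dyad l a"
    and "real_of_int b < t * 2^m" "t * 2^m < real_of_int b + 1"
  shows "{real_of_int b / 2^m .. (real_of_int b + 1) / 2^m} \<subseteq> dyad l a"
proof -
  define D :: nat where "D = 2 ^ nat l"
  define K :: nat where "K = 2 ^ (m - nat l)"
  have PD: "2 powr (real_of_int l) = real D"
    using assms(1) unfolding D_def by (simp add: powr_realpow[symmetric])
  have DK: "(2::real)^m = real D * real K"
    using assms(1,2) unfolding D_def K_def by (simp flip: power_add)
  have D0: "real D > 0" "real K > 0" unfolding D_def K_def by auto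
  have t1: "real_of_int a / real D \<le> t" "t \<le> (real_of_int a + 1) / real D"
    using assms(3) unfolding dyad_def PD by auto
  have "real_of_int a * real K \<le> t * 2^m" using t1(1) D0 DK by (simp add: field_simps)
  hence "real_of_int (a * int K) < real_of_int (b + 1)" using assms(4,5) by simp
  hence i1: "a * int K \<le> b" by linarith
  have "t * real D * real K \<le> (real_of_int a + 1) * real K"
    using t1(2) D0 by (intro mult_right_mono) (auto simp: field_simps)
  hence "t * 2^m \<le> (real_of_int a + 1) * real K" using DK by (simp add: mult.assoc)
  hence "real_of_int b < real_of_int ((a + 1) * int K)" using assms(4) by simp
  hence i2: "b + 1 \<le> (a+1) * int K" by linarith
  have "real_of_int (a * int K) \<le> real_of_int b" using i1 by (simp only: of_int_le_iff)
  hence r1: "real_of_int a * real K \<le> real_of_int b" by simp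
  have "real_of_int (b + 1) \<le> real_of_int ((a+1) * int K)" using i2 by (simp only: of_int_le_iff)
  hence r2: "real_of_int b + 1 \<le> (real_of_int a + 1) * real K" by simp
  show ?thesis
  proof
    fix s assume s: "s \<in> {real_of_int b / 2^m .. (real_of_int b + 1) / 2^m}"
    have "real_of_int a / real D \<le> s"
    proof -
      have "real_of_int a / real D = real_of_int a * real K / 2^m" using DK D0 by simp
      also have "\<dots> \<le> real_of_int b / 2^m" using r1 by (simp add: divide_right_mono)
      finally show ?thesis using s by simp
    qed
    moreover have "s \<le> (real_of_int a + 1) / real D"
    proof -
      have "(real_of_int a + 1) / real D = (real_of_int a + 1) * real K / 2^m" using DK D0 by simp
      moreover have "(real_of_int b + 1) / 2^m \<le> (real_of_int a + 1) * real K / 2^m" using r2 by (simp add: divide_right_mono)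
      ultimately show ?thesis using s by simp
    qed
    ultimately show "s \<in> dyad l a" unfolding dyad_def PD by simp
  qed
qed

lemma Acomp_cell:
  fixes m :: nat
  assumes "0 \<le> lexp \<delta> \<alpha> x" "lexp \<delta> \<alpha> x \<le> int m" "t \<in> Acomp \<delta> \<alpha> x"
    and "real_of_int b < t * 2^m" "t * 2^m < real_of_int b + 1"
  shows "{real_of_int b / 2^m .. (real_of_int b + 1) / 2^m} \<subseteq> Acomp \<delta> \<alpha> x"
proof -
  from assms(3) obtain a where a: "t \<in> dyad (lexp \<delta> \<alpha> x) a" "dyad (lexp \<delta> \<alpha> x) a \<subseteq> {0..1}"
     "dyad_int (lexp \<delta> \<alpha> x) a \<inter> Eset \<delta> \<alpha> x = {}"
    unfolding Acomp_def by blast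
  have "{real_of_int b / 2^m .. (real_of_int b + 1) / 2^m} \<subseteq> dyad (lexp \<delta> \<alpha> x) a"
    using cell_in_dyad[OF assms(1,2) a(1) assms(4,5)] .
  moreover have "dyad (lexp \<delta> \<alpha> x) a \<subseteq> Acomp \<delta> \<alpha> x" unfolding Acomp_def using a by blast
  ultimately show ?thesis by blast
qed

lemma B_cells:
  fixes m :: nat
  assumes "0 < \<delta>" "\<delta> \<le> 1/4" "\<alpha>1 \<in> {0..1}" "\<alpha>2 \<in> {0..1}"
    and m1: "\<And>x. x \<in> Kset \<delta> \<xi> \<beta>1 q \<Longrightarrow> lexp \<delta> \<alpha>1 x \<le> int m"
    and m2: "\<And>x. x \<in> Kset \<delta> \<xi> \<beta>2 q \<Longrightarrow> lexp \<delta> \<alpha>2 x \<le> int m"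
  shows "Bset \<delta> \<xi> \<alpha>1 \<beta>1 \<alpha>2 \<beta>2 q \<subseteq>
     (\<Union>b\<in>{b. b < 2^m \<and> {real b / 2^m .. (real b + 1) / 2^m} \<subseteq> Bset \<delta> \<xi> \<alpha>1 \<beta>1 \<alpha>2 \<beta>2 q}.
        {real b / 2^m .. (real b + 1) / 2^m}) \<union> (\<lambda>k. real k / 2^m) ` {..2^m}"
proof
  fix t assume tS: "t \<in> Bset \<delta> \<xi> \<alpha>1 \<beta>1 \<alpha>2 \<beta>2 q"
  show "t \<in> (\<Union>b\<in>{b. b < 2^m \<and> {real b / 2^m .. (real b + 1) / 2^m} \<subseteq> Bset \<delta> \<xi> \<alpha>1 \<beta>1 \<alpha>2 \<beta>2 q}.
        {real b / 2^m .. (real b + 1) / 2^m}) \<union> (\<lambda>k. real k / 2^m) ` {..2^m}"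
  proof (cases "t \<in> (\<lambda>k. real k / 2^m) ` {..2^m}")
    case True then show ?thesis by blast
  next
    case False
    have t01: "t \<in> {0..1}" using tS unfolding Bset_def by auto
    define b :: nat where "b = nat \<lfloor>t * 2^m\<rfloor>"
    have tm0: "t * 2^m \<ge> 0" using t01 by auto
    have bfl: "real b = of_int \<lfloor>t * 2^m\<rfloor>" unfolding b_def using tm0 by simp
    have ne: "t * 2^m \<noteq> real b"
    proof
      assume h: "t * 2^m = real b"
      then have "t = real b / 2^m" by (simp add: field_simps)
      moreover have "b \<le> 2^m"
      proof -
        have "t * 2^m \<le> 1 * 2^m" using t01 by (intro mult_right_mono) auto
        then have "real b \<le> real (2^m::nat)" using h by simp
        then show ?thesis by linarith
      qed
      ultimately show False using False by auto
    qed
    have bl: "real b < t * 2^m" using ne bfl by (metis of_int_floor_le order_le_neq_trans)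
    have bu: "t * 2^m < real b + 1" using bfl by linarith
    have bm: "b < 2^m"
    proof -
      have "t * 2^m \<le> 1 * 2^m" using t01 by (intro mult_right_mono) auto
      then have "real b < (2::real)^m" using bl by linarith
      then have "real b < real (2^m::nat)" by simp
      then show ?thesis by (simp only: of_nat_less_iff)
    qed
    have lb: "real_of_int (int b) < t * 2^m" "t * 2^m < real_of_int (int b) + 1" using bl bu by auto
    have c01: "{real b / 2^m .. (real b + 1) / 2^m} \<subseteq> {0..1}"
    proof -
      have "b + 1 \<le> 2^m" using bm by simp
      then have "real (b + 1) \<le> real ((2::nat)^m)" by (simp only: of_nat_le_iff)
      then have "real b + 1 \<le> 2^m" by simp
      then show ?thesis by (auto simp: field_simps)
    qed
    have c1: "{real b / 2^m .. (real b + 1) / 2^m} \<subseteq> Acomp \<delta> \<alpha>1 x" if x: "x \<in> Kset \<delta> \<xi> \<beta>1 q" for x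
    proof -
      have x1: "1 \<le> x" using x unfolding Kset_def by auto
      have "0 \<le> lexp \<delta> \<alpha>1 x" using lexp_props(1)[of \<delta> \<alpha>1 x] assms x1 by auto
      moreover have "t \<in> Acomp \<delta> \<alpha>1 x" using tS x unfolding Bset_def by auto
      ultimately show ?thesis using Acomp_cell[OF _ m1[OF x] _ lb] by simp
    qed
    have c2: "{real b / 2^m .. (real b + 1) / 2^m} \<subseteq> Acomp \<delta> \<alpha>2 x" if x: "x \<in> Kset \<delta> \<xi> \<beta>2 q" for x
    proof -
      have x1: "1 \<le> x" using x unfolding Kset_def by auto
      have "0 \<le> lexp \<delta> \<alpha>2 x" using lexp_props(1)[of \<delta> \<alpha>2 x] assms x1 by auto
      moreover have "t \<in> Acomp \<delta> \<alpha>2 x" using tS x unfolding Bset_def by auto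
      ultimately show ?thesis using Acomp_cell[OF _ m2[OF x] _ lb] by simp
    qed
    have "{real b / 2^m .. (real b + 1) / 2^m} \<subseteq> Bset \<delta> \<xi> \<alpha>1 \<beta>1 \<alpha>2 \<beta>2 q"
      unfolding Bset_def using c01 c1 c2 by blast
    moreover have "t \<in> {real b / 2^m .. (real b + 1) / 2^m}" using bl bu by (auto simp: field_simps)
    ultimately show ?thesis using bm by blast
  qed
qed




lemma Ico_lmeas: "{a..<b::real} \<in> lmeasurable"
  by (rule fmeasurableI2[OF lmeasurable_interval(1)[of a b]]) auto

lemma meas_Ico: "a \<le> b \<Longrightarrow> measure lebesgue {a..<b::real} = b - a"
  by (subst measure_completion) auto

lemma meas_Ioo: "a \<le> b \<Longrightarrow> measure lebesgue {a<..<b::real} = b - a"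
  by (subst measure_completion) auto

lemma card_nat_interval:
  fixes Y :: "nat set"
  assumes "finite Y" "\<And>y. y \<in> Y \<Longrightarrow> u < real y \<and> real y < v" "u \<le> v"
  shows "real (card Y) \<le> v - u + 1"
proof (cases "Y = {}")
  case True then show ?thesis using assms by simp
next
  case False
  define lo where "lo = Min Y"
  define hi where "hi = Max Y"
  have "lo \<in> Y" "hi \<in> Y" using False assms(1) lo_def hi_def by auto
  then have b: "u < real lo" "real hi < v" using assms(2) by auto
  have "Y \<subseteq> {lo..hi}" using assms(1) lo_def hi_def by auto
  then have "card Y \<le> card {lo..hi}" by (intro card_mono) auto
  also have "\<dots> = hi + 1 - lo" by simp
  finally have "real (card Y) \<le> real (hi + 1 - lo)" by simp
  also have "\<dots> \<le> real hi + 1 - real lo"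
  proof -
    have "lo \<le> hi" using \<open>lo \<in> Y\<close> assms(1) hi_def by simp
    then show ?thesis by (simp add: of_nat_diff)
  qed
  finally show ?thesis using b by linarith
qed




lemma cells_sum_bound:
  fixes S :: "real set" and m x :: nat and r :: real
  defines "G \<equiv> {b. b < (2::nat)^m \<and> {real b / 2^m .. (real b + 1) / 2^m} \<subseteq> S}"
  assumes S: "S \<in> lmeasurable"
    and cov: "S \<subseteq> (\<Union>b\<in>G. {real b / 2^m .. (real b + 1) / 2^m}) \<union> (\<lambda>k. real k / 2^m) ` {..(2::nat)^m}"
    and r: "r > 0" and x: "x \<ge> 1"
  shows "(\<Sum>y\<in>{0..x}. measure lebesgue (S \<inter> {real y / real x - r <..< real y / real x + r}))
           \<le> measure lebesgue S * 2^m * (2 * r) * (real x * (1 / 2^m + 2 * r) + 1)"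
proof -
  define h :: real where "h = 1 / 2^m"
  have h0: "h > 0" unfolding h_def by simp
  define cell where "cell b = {real b / 2^m .. (real b + 1) / 2^m :: real}" for b :: nat
  define J where "J y = {real y / real x - r <..< real y / real x + r}" for y :: nat
  have finG: "finite G" unfolding G_def by auto
  have lowS: "real (card G) * h \<le> measure lebesgue S"
  proof -
    define hc where "hc b = {real b / 2^m ..< (real b + 1) / 2^m :: real}" for b :: nat
    have sub: "(\<Union>b\<in>G. hc b) \<subseteq> S" unfolding hc_def G_def by auto
    have "measure lebesgue (\<Union>b\<in>G. hc b) = (\<Sum>b\<in>G. measure lebesgue (hc b))"
    proof (rule measure_UNION')
      show "finite G" by fact
      show "hc i \<in> fmeasurable lebesgue" for i unfolding hc_def by (rule Ico_lmeas)
      show "pairwise (\<lambda>i j. disjnt (hc i) (hc j)) G"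
        unfolding pairwise_def disjnt_def hc_def
      proof (intro ballI impI)
        fix i j :: nat assume "i \<noteq> j"
        then consider "i + 1 \<le> j" | "j + 1 \<le> i" by linarith
        then show "{real i / 2 ^ m..<(real i + 1) / 2 ^ m} \<inter> {real j / 2 ^ m..<(real j + 1) / 2 ^ m} = {}"
        proof cases
          case 1
          then have "real i + 1 \<le> real j" by simp
          then have "(real i + 1) / 2^m \<le> real j / 2^m" by (simp add: divide_right_mono)
          then show ?thesis by auto
        next
          case 2
          then have "real j + 1 \<le> real i" by simp
          then have "(real j + 1) / 2^m \<le> real i / 2^m" by (simp add: divide_right_mono)
          then show ?thesis by auto
        qed
      qed
    qed
    also have "\<dots> = (\<Sum>b\<in>G. h)"
      by (intro sum.cong refl) (simp add: hc_def h_def meas_Ico divide_right_mono add_divide_distrib)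
    also have "\<dots> = real (card G) * h" by simp
    finally have eq: "measure lebesgue (\<Union>b\<in>G. hc b) = real (card G) * h" .
    have "measure lebesgue (\<Union>b\<in>G. hc b) \<le> measure lebesgue S"
      using sub S finG by (intro measure_mono_fmeasurable) (auto intro!: sets.finite_UN Ico_lmeas simp: hc_def)
    then show ?thesis using eq by simp
  qed
  have pery: "measure lebesgue (S \<inter> J y) \<le> (\<Sum>b\<in>G. (if cell b \<inter> J y \<noteq> {} then 2 * r else 0))" for y
  proof -
    define Pts where "Pts = (\<lambda>k. real k / 2^m) ` {..(2::nat)^m}"
    have finP: "finite Pts" unfolding Pts_def by simp
    have s1: "S \<inter> J y \<subseteq> (\<Union>b\<in>G. cell b \<inter> J y) \<union> Pts" using cov unfolding cell_def Pts_def by blast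
    have m1: "(\<Union>b\<in>G. cell b \<inter> J y) \<in> lmeasurable"
      using finG by (intro fmeasurable.finite_UN) (auto simp: cell_def J_def)
    have m2: "Pts \<in> lmeasurable" using finP by (intro lmeasurable_compact finite_imp_compact)
    have "measure lebesgue (S \<inter> J y) \<le> measure lebesgue ((\<Union>b\<in>G. cell b \<inter> J y) \<union> Pts)"
      using s1 S m1 m2 by (intro measure_mono_fmeasurable) (auto simp: J_def)
    also have "\<dots> \<le> measure lebesgue (\<Union>b\<in>G. cell b \<inter> J y) + measure lebesgue Pts"
      using m1 m2 by (intro measure_Un_le) auto
    also have "measure lebesgue Pts = 0" using finP by (simp add: negligible_imp_measure0 negligible_finite)
    also have "measure lebesgue (\<Union>b\<in>G. cell b \<inter> J y) \<le> (\<Sum>b\<in>G. measure lebesgue (cell b \<inter> J y))"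
      using finG by (intro measure_UNION_le) (auto simp: cell_def J_def)
    also have "\<dots> \<le> (\<Sum>b\<in>G. (if cell b \<inter> J y \<noteq> {} then 2 * r else 0))"
    proof (intro sum_mono)
      fix b assume "b \<in> G"
      show "measure lebesgue (cell b \<inter> J y) \<le> (if cell b \<inter> J y \<noteq> {} then 2 * r else 0)"
      proof (cases "cell b \<inter> J y = {}")
        case True then show ?thesis by simp
      next
        case False
        have "measure lebesgue (cell b \<inter> J y) \<le> measure lebesgue (J y)"
          by (intro measure_mono_fmeasurable) (auto simp: J_def cell_def)
        also have "\<dots> = 2 * r" unfolding J_def using r by (subst meas_Ioo) auto
        finally show ?thesis using False by simp
      qed
    qed
    finally show ?thesis by simp
  qed
  have cnt: "real (card {y\<in>{0..x}. cell b \<inter> J y \<noteq> {}}) \<le> real x * (h + 2 * r) + 1" for b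
  proof -
    define u where "u = real x * (real b / 2^m - r)"
    define v where "v = real x * ((real b + 1) / 2^m + r)"
    have "real (card {y\<in>{0..x}. cell b \<inter> J y \<noteq> {}}) \<le> v - u + 1"
    proof (rule card_nat_interval)
      show "finite {y\<in>{0..x}. cell b \<inter> J y \<noteq> {}}" by simp
      show "u \<le> v" unfolding u_def v_def using r x
        by (intro mult_left_mono) (auto simp: add_divide_distrib)
      fix y assume "y \<in> {y\<in>{0..x}. cell b \<inter> J y \<noteq> {}}"
      then obtain s where s: "real b / 2^m \<le> s" "s \<le> (real b + 1) / 2^m"
        "real y / real x - r < s" "s < real y / real x + r"
        unfolding cell_def J_def by auto
      have xp: "real x > 0" using x by simp
      have "real b / 2^m - r < real y / real x" "real y / real x < (real b + 1) / 2^m + r"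
        using s by linarith+
      then show "u < real y \<and> real y < v" unfolding u_def v_def using xp
        by (auto simp: field_simps)
    qed
    also have "v - u + 1 = real x * (h + 2 * r) + 1" unfolding u_def v_def h_def
      by (simp add: field_simps)
    finally show ?thesis .
  qed
  have "(\<Sum>y\<in>{0..x}. measure lebesgue (S \<inter> J y))
        \<le> (\<Sum>y\<in>{0..x}. \<Sum>b\<in>G. (if cell b \<inter> J y \<noteq> {} then 2 * r else 0))"
    by (intro sum_mono pery)
  also have "\<dots> = (\<Sum>b\<in>G. \<Sum>y\<in>{0..x}. (if cell b \<inter> J y \<noteq> {} then 2 * r else 0))"
    by (rule sum.swap)
  also have "\<dots> = (\<Sum>b\<in>G. 2 * r * real (card {y\<in>{0..x}. cell b \<inter> J y \<noteq> {}}))"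
    by (intro sum.cong refl) (simp add: sum.If_cases Int_def atLeast0AtMost)
  also have "\<dots> \<le> (\<Sum>b\<in>G. 2 * r * (real x * (h + 2 * r) + 1))"
    using r by (intro sum_mono mult_left_mono cnt) auto
  also have "\<dots> = real (card G) * h * (2^m * (2 * r) * (real x * (h + 2 * r) + 1))"
    unfolding h_def by simp
  also have "\<dots> \<le> measure lebesgue S * (2^m * (2 * r) * (real x * (h + 2 * r) + 1))"
    using lowS r h0 by (intro mult_right_mono) auto
  finally show ?thesis unfolding J_def h_def by (simp add: mult.assoc)
qed




lemma dyad_sub_fin: "finite {a. dyad l a \<subseteq> {0..1}}"
proof -
  define P where "P = 2 powr (real_of_int l)"
  have P0: "P > 0" unfolding P_def by simp
  have "{a. dyad l a \<subseteq> {0..1}} \<subseteq> {0..\<lceil>P\<rceil>}"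
  proof
    fix a assume "a \<in> {a. dyad l a \<subseteq> {0..1}}"
    then have sub: "{real_of_int a / P .. (real_of_int a + 1) / P} \<subseteq> {0..1}"
      unfolding dyad_def P_def by simp
    have le: "real_of_int a / P \<le> (real_of_int a + 1) / P" using P0 by (simp add: divide_right_mono)
    have "real_of_int a / P \<ge> 0" using sub le by auto
    then have "a \<ge> 0" using P0 by (simp add: zero_le_divide_iff)
    moreover have "(real_of_int a + 1) / P \<le> 1" using sub le by auto
    then have "real_of_int a + 1 \<le> P" using P0 by (simp add: divide_le_eq)
    then have "a \<le> \<lceil>P\<rceil>" by linarith
    ultimately show "a \<in> {0..\<lceil>P\<rceil>}" by simp
  qed
  then show ?thesis by (rule finite_subset) simp
qed

lemma Acomp_closed: "closed (Acomp \<delta> \<alpha> x)"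
proof -
  have "Acomp \<delta> \<alpha> x = \<Union> (dyad (lexp \<delta> \<alpha> x) ` {a. dyad (lexp \<delta> \<alpha> x) a \<subseteq> {0..1} \<and>
           dyad_int (lexp \<delta> \<alpha> x) a \<inter> Eset \<delta> \<alpha> x = {}})"
    unfolding Acomp_def by blast
  also have "closed \<dots>"
    by (intro closed_Union finite_imageI finite_subset[OF _ dyad_sub_fin[of "lexp \<delta> \<alpha> x"]])
       (auto simp: dyad_def)
  finally show ?thesis .
qed

lemma Bset_compact: "compact (Bset \<delta> \<xi> \<alpha>1 \<beta>1 \<alpha>2 \<beta>2 q)"
proof -
  have "closed (Bset \<delta> \<xi> \<alpha>1 \<beta>1 \<alpha>2 \<beta>2 q)" unfolding Bset_def
    by (intro closed_Int closed_INT) (auto simp: Acomp_closed)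
  moreover have "bounded (Bset \<delta> \<xi> \<alpha>1 \<beta>1 \<alpha>2 \<beta>2 q)" unfolding Bset_def
    by (rule bounded_subset[of "{0..1}"]) auto
  ultimately show ?thesis by (simp add: compact_eq_bounded_closed)
qed




lemma xErad:
  assumes "1 \<le> x"
  shows "real x * Erad \<delta> \<alpha> x = \<delta> / (real x * ln (real x + 1)) powr \<alpha>"
proof -
  have x0: "real x > 0" using assms by simp
  have "real x powr (1 + \<alpha>) = real x * real x powr \<alpha>" using x0 by (simp add: powr_add)
  moreover have "(real x * ln (real x + 1)) powr \<alpha> = real x powr \<alpha> * ln (real x + 1) powr \<alpha>"
    using x0 by (simp add: powr_mult)
  ultimately show ?thesis unfolding Erad_def using x0 by (simp add: field_simps)
qed

lemma weight_le:
  assumes "0 < \<delta>" "0 \<le> \<alpha>" "2 \<le> x"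
  shows "\<delta> / (real x * ln (real x + 1)) powr \<alpha> \<le> \<delta>"
proof -
  have "ln (real x + 1) \<ge> ln 3" using assms by simp
  moreover have "ln (3::real) \<ge> 1"
    using ln_ge_iff[of 3 1] exp_le by (simp add: exp_le less_le_trans)
  ultimately have L1: "ln (real x + 1) \<ge> 1" by linarith
  have "real x * ln (real x + 1) \<ge> 1 * 1" using L1 assms by (intro mult_mono) auto
  then have "(real x * ln (real x + 1)) powr \<alpha> \<ge> 1" using assms by (intro ge_one_powr_ge_zero) auto
  then show ?thesis using assms by (simp add: divide_le_eq)
qed

lemma removal:
  fixes S :: "real set" and m x :: nat
  assumes d: "0 < \<delta>" "\<delta> \<le> 1/100" and a: "0 \<le> \<alpha>" "\<alpha> \<le> 1" and x: "2 \<le> x" "2^m \<le> x"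
    and S: "S \<in> lmeasurable" "S \<subseteq> {0..1}"
    and cov: "S \<subseteq> (\<Union>b\<in>{b. b < (2::nat)^m \<and> {real b / 2^m .. (real b + 1) / 2^m} \<subseteq> S}.
               {real b / 2^m .. (real b + 1) / 2^m}) \<union> (\<lambda>k. real k / 2^m) ` {..(2::nat)^m}"
  shows "measure lebesgue (S - Acomp \<delta> \<alpha> x) \<le> 25 * (\<delta> / (real x * ln (real x + 1)) powr \<alpha>) * measure lebesgue S"
proof -
  define R where "R = Erad \<delta> \<alpha> x"
  define r where "r = 5 * R"
  define w where "w = \<delta> / (real x * ln (real x + 1)) powr \<alpha>"
  have x1: "1 \<le> x" using x by simp
  have R0: "R > 0" using Erad_pos d x1 R_def by auto
  have r0: "r > 0" using R0 r_def by simp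
  have wR: "real x * R = w" using xErad[OF x1] R_def w_def by simp
  have wd: "w \<le> \<delta>" using weight_le[OF d(1) a(1) x(1)] w_def by simp
  have "real x * R \<ge> 0" using R0 by simp
  then have w0: "w \<ge> 0" using wR by simp
  define J where "J y = {real y / real x - r <..< real y / real x + r}" for y :: nat
  have sub: "S - Acomp \<delta> \<alpha> x \<subseteq> (\<Union>y\<in>{0..x}. S \<inter> J y)"
  proof
    fix t assume t: "t \<in> S - Acomp \<delta> \<alpha> x"
    then have "t \<in> {0..1}" using S by auto
    then obtain y where "y \<in> {0..x}" "\<bar>t - real y / real x\<bar> < 5 * Erad \<delta> \<alpha> x"
      using A_cover[of \<delta> \<alpha> x t] d a x1 t by auto
    then have "y \<in> {0..x}" "t \<in> S \<inter> J y" using t unfolding J_def r_def R_def by (auto simp: abs_less_iff)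
    then show "t \<in> (\<Union>y\<in>{0..x}. S \<inter> J y)" by blast
  qed
  have mS: "S - Acomp \<delta> \<alpha> x \<in> sets lebesgue"
    using S Acomp_closed[of \<delta> \<alpha> x] by (auto intro!: sets.Diff borel_closed)
  have mU: "(\<Union>y\<in>{0..x}. S \<inter> J y) \<in> lmeasurable"
    using S by (intro fmeasurable.finite_UN) (auto simp: J_def)
  have "measure lebesgue (S - Acomp \<delta> \<alpha> x) \<le> measure lebesgue (\<Union>y\<in>{0..x}. S \<inter> J y)"
    using sub mS mU by (intro measure_mono_fmeasurable) auto
  also have "\<dots> \<le> (\<Sum>y\<in>{0..x}. measure lebesgue (S \<inter> J y))"
    using S by (intro measure_UNION_le) (auto simp: J_def)
  also have "\<dots> \<le> measure lebesgue S * 2^m * (2 * r) * (real x * (1 / 2^m + 2 * r) + 1)"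
    unfolding J_def using cells_sum_bound[OF S(1) cov r0 x1] .
  also have "\<dots> \<le> measure lebesgue S * (25 * w)"
  proof -
    have mpos: "measure lebesgue S \<ge> 0" by simp
    have e: "(2::real)^m * (2 * r) * (real x * (1 / 2^m + 2 * r) + 1)
           = 2 * r * real x + 4 * r * r * real x * 2^m + 2 * r * 2^m"
      by (simp add: field_simps)
    have xm: "(2::real)^m \<le> real x" using x(2) by (metis of_nat_le_iff of_nat_numeral of_nat_power)
    have rx: "r * real x = 5 * w" using wR r_def by (simp add: algebra_simps)
    have "4 * r * r * real x * 2^m \<le> 4 * r * r * real x * real x"
      using xm r0 by (intro mult_left_mono) auto
    moreover have "2 * r * 2^m \<le> 2 * r * real x" using xm r0 by simp
    moreover have "4 * r * r * real x * real x = 4 * (r * real x) * (r * real x)" by (simp add: algebra_simps)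
    then have "4 * r * r * real x * real x = 4 * (5 * w) * (5 * w)" using rx by simp
    moreover have "2 * r * real x = 10 * w" using rx by simp
    moreover have "4 * (5 * w) * (5 * w) \<le> 4 * (5 * w) * (1/20)"
      using wd d w0 by (intro mult_left_mono) auto
    ultimately have "(2::real)^m * (2 * r) * (real x * (1 / 2^m + 2 * r) + 1) \<le> 25 * w"
      unfolding e using w0 by linarith
    then show ?thesis using mpos
      by (metis mult.assoc mult_left_mono)
  qed
  finally show ?thesis unfolding w_def by (simp add: algebra_simps)
qed




lemma dnint_le: "dnint t \<le> \<bar>t - of_int k\<bar>"
proof (cases "\<bar>t - of_int k\<bar> \<ge> 1/2")
  case True
  have "\<bar>t - of_int (round t)\<bar> \<le> 1/2" using of_int_round_abs_le[of t] by (simp add: abs_minus_commute)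
  then show ?thesis using True unfolding dnint_def by simp
next
  case False
  have r: "\<bar>of_int (round t) - t\<bar> \<le> 1/2" by (rule of_int_round_abs_le)
  have "\<bar>of_int k - of_int (round t)\<bar> < (1::real)" using False r by linarith
  then have "\<bar>k - round t\<bar> < 1" by linarith
  then have "k = round t" by linarith
  then show ?thesis unfolding dnint_def by simp
qed

lemma dnint_nonneg: "dnint t \<ge> 0" unfolding dnint_def by simp

lemma dnint_diff: "dnint (a - b) \<le> dnint a + dnint b"
proof -
  have "dnint (a - b) \<le> \<bar>(a - b) - of_int (round a - round b)\<bar>" by (rule dnint_le)
  also have "\<dots> \<le> \<bar>a - of_int (round a)\<bar> + \<bar>b - of_int (round b)\<bar>" by simp
  finally show ?thesis unfolding dnint_def .
qed

lemma bad_from_inf: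
  assumes "(INF n\<in>{n::nat. 1 \<le> n}. real n * dnint (real n * \<xi>)) \<ge> \<delta>" "1 \<le> n"
  shows "\<delta> \<le> real n * dnint (real n * \<xi>)"
proof -
  have "bdd_below ((\<lambda>n. real n * dnint (real n * \<xi>)) ` {n::nat. 1 \<le> n})"
    by (rule bdd_belowI[of _ 0]) (auto simp: dnint_nonneg)
  then have "(INF n\<in>{n::nat. 1 \<le> n}. real n * dnint (real n * \<xi>)) \<le> real n * dnint (real n * \<xi>)"
    using assms(2) by (intro cINF_lower) auto
  then show ?thesis using assms(1) by linarith
qed

definition Lw :: "nat \<Rightarrow> real" where "Lw x = real x * ln (real x + 1)"

lemma Lw_pos: "1 \<le> x \<Longrightarrow> Lw x > 0" unfolding Lw_def by simp

lemma Lw_mono: "1 \<le> x \<Longrightarrow> x \<le> y \<Longrightarrow> Lw x \<le> Lw y"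
  unfolding Lw_def by (intro mult_mono) auto

lemma K_self:
  assumes bad: "\<And>n. 1 \<le> n \<Longrightarrow> \<delta> \<le> real n * dnint (real n * \<xi>)" and d: "0 < \<delta>"
    and x: "x \<in> Kset \<delta> \<xi> \<beta> Q"
  shows "Lw x powr \<beta> \<le> real x"
proof -
  have x1: "1 \<le> x" using x unfolding Kset_def by auto
  have k: "dnint (real x * \<xi>) \<le> \<delta> / Lw x powr \<beta>" using x unfolding Kset_def Lw_def by auto
  have p: "Lw x powr \<beta> > 0" using Lw_pos[OF x1] by simp
  have "\<delta> \<le> real x * (\<delta> / Lw x powr \<beta>)" using bad[OF x1] k x1
    by (meson mult_left_mono of_nat_0_le_iff order_trans)
  then have "\<delta> * Lw x powr \<beta> \<le> real x * \<delta>" using p by (simp add: field_simps)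
  then show ?thesis using d by (simp add: mult.commute)
qed

lemma K_sep:
  assumes bad: "\<And>n. 1 \<le> n \<Longrightarrow> \<delta> \<le> real n * dnint (real n * \<xi>)" and d: "0 < \<delta>" and b: "0 \<le> \<beta>"
    and x: "x \<in> Kset \<delta> \<xi> \<beta> Q" and x': "x' \<in> Kset \<delta> \<xi> \<beta> Q'" and lt: "x < x'"
  shows "Lw x powr \<beta> / 2 \<le> real x' - real x"
proof -
  have x1: "1 \<le> x" using x unfolding Kset_def by auto
  have k: "dnint (real x * \<xi>) \<le> \<delta> / Lw x powr \<beta>" using x unfolding Kset_def Lw_def by auto
  have k': "dnint (real x' * \<xi>) \<le> \<delta> / Lw x' powr \<beta>" using x' unfolding Kset_def Lw_def by auto
  have p: "Lw x powr \<beta> > 0" using Lw_pos[OF x1] by simp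
  have "Lw x powr \<beta> \<le> Lw x' powr \<beta>" using Lw_mono[OF x1] lt b Lw_pos[OF x1] by (intro powr_mono2) auto
  then have "\<delta> / Lw x' powr \<beta> \<le> \<delta> / Lw x powr \<beta>" using p d by (intro divide_left_mono mult_pos_pos) auto
  define dd where "dd = x' - x"
  have dd1: "1 \<le> dd" using lt dd_def by simp
  have ddr: "real dd = real x' - real x" using lt dd_def by simp
  have "dnint (real dd * \<xi>) = dnint (real x' * \<xi> - real x * \<xi>)" using ddr by (simp add: left_diff_distrib)
  also have "\<dots> \<le> dnint (real x' * \<xi>) + dnint (real x * \<xi>)" by (rule dnint_diff)
  also have "\<dots> \<le> 2 * (\<delta> / Lw x powr \<beta>)" using k k' \<open>\<delta> / Lw x' powr \<beta> \<le> \<delta> / Lw x powr \<beta>\<close> by linarith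
  finally have "dnint (real dd * \<xi>) \<le> 2 * (\<delta> / Lw x powr \<beta>)" .
  then have "\<delta> \<le> real dd * (2 * (\<delta> / Lw x powr \<beta>))" using bad[OF dd1]
    by (meson mult_left_mono of_nat_0_le_iff order_trans)
  then have "\<delta> * Lw x powr \<beta> \<le> real dd * 2 * \<delta>" using p by (simp add: field_simps)
  then have "Lw x powr \<beta> \<le> real dd * 2" using d by (simp add: mult.commute)
  then show ?thesis using ddr by simp
qed




lemma ln_ge_1_minus_inv: "0 < y \<Longrightarrow> 1 - 1 / y \<le> ln (y::real)"
proof -
  assume y: "0 < y"
  have "ln (1 / y) \<le> 1 / y - 1" using y by (intro ln_le_minus_one) auto
  then show ?thesis using y by (simp add: ln_div)
qed

lemma tele_term:
  assumes "2 \<le> n"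
  shows "1 / Lw n \<le> 2 * (ln (ln (real (Suc n))) - ln (ln (real n)))"
proof -
  define A where "A = ln (real n)"
  define B where "B = ln (real n + 1)"
  have n0: "real n > 1" using assms by simp
  have A0: "A > 0" unfolding A_def using n0 by simp
  have AB: "A < B" unfolding A_def B_def using n0 by simp
  have B0: "B > 0" using A0 AB by simp
  have "1 - 1 / (real (n+1) / real n) \<le> ln (real (n+1) / real n)"
    using n0 by (intro ln_ge_1_minus_inv) auto
  moreover have "ln (real (n+1) / real n) = B - A" unfolding A_def B_def using n0 by (simp add: ln_div)
  moreover have "1 - 1 / (real (n+1) / real n) = 1 / (real n + 1)" using n0 by (simp add: field_simps)
  ultimately have BA: "1 / (real n + 1) \<le> B - A" by simp
  have "1 - 1 / (B / A) \<le> ln (B / A)" using A0 B0 by (intro ln_ge_1_minus_inv) auto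
  moreover have "ln (B / A) = ln B - ln A" using A0 B0 by (simp add: ln_div)
  moreover have "1 - 1 / (B / A) = (B - A) / B" using A0 B0 by (simp add: field_simps)
  ultimately have "(B - A) / B \<le> ln B - ln A" by simp
  moreover have "1 / ((real n + 1) * B) \<le> (B - A) / B"
  proof -
    have "1 / (real n + 1) / B \<le> (B - A) / B" using divide_right_mono[OF BA, of B] B0 by simp
    then show ?thesis by (simp add: divide_divide_eq_left)
  qed
  moreover have "1 / Lw n \<le> 2 * (1 / ((real n + 1) * B))"
  proof -
    have le: "(real n + 1) * B \<le> 2 * (real n * B)" using n0 B0 by (simp add: algebra_simps)
    have "1 / (real n * B) = 2 / (2 * (real n * B))" by simp
    also have "\<dots> \<le> 2 / ((real n + 1) * B)" using le n0 B0 by (intro divide_left_mono) auto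
    finally show ?thesis unfolding Lw_def B_def by simp
  qed
  ultimately have "1 / Lw n \<le> 2 * (ln B - ln A)"
    by (smt (verit) mult_left_mono)
  then show ?thesis unfolding A_def B_def by (simp add: add.commute)
qed

lemma tele_sum:
  assumes "2 \<le> a" "a \<le> Suc b"
  shows "(\<Sum>n=a..b. 1 / Lw n) \<le> 2 * (ln (ln (real (Suc b))) - ln (ln (real a)))"
proof -
  have "(\<Sum>n=a..b. 1 / Lw n) \<le> (\<Sum>n=a..b. 2 * (ln (ln (real (Suc n))) - ln (ln (real n))))"
    using assms by (intro sum_mono tele_term) auto
  also have "\<dots> = 2 * (\<Sum>n=a..b. (ln (ln (real (Suc n))) - ln (ln (real n))))"
    by (simp add: sum_distrib_left)
  also have "(\<Sum>n=a..b. (ln (ln (real (Suc n))) - ln (ln (real n)))) = ln (ln (real (Suc b))) - ln (ln (real a))"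
    using sum_Suc_diff[OF assms(2), of "\<lambda>n. ln (ln (real n))"] by simp
  finally show ?thesis .
qed

lemma K_sum:
  assumes bad: "\<And>n. 1 \<le> n \<Longrightarrow> \<delta> \<le> real n * dnint (real n * \<xi>)" and d: "0 < \<delta>"
    and ab: "0 \<le> \<alpha>" "0 \<le> \<beta>" "\<alpha> + \<beta> = 1"
    and Kx: "Kx \<subseteq> Kset \<delta> \<xi> \<beta> Q" "finite Kx" "\<And>x. x \<in> Kx \<Longrightarrow> a < x \<and> x \<le> b"
  shows "(\<Sum>x\<in>Kx. \<delta> / Lw x powr \<alpha>) \<le> 8 * \<delta> * (\<Sum>n=a+1..2*b. 1 / Lw n)"
proof -
  define w where "w x = Lw x powr \<beta> / 2" for x
  define I where "I x = {n. x \<le> n \<and> real n < real x + w x}" for x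
  have x1: "1 \<le> x" if "x \<in> Kx" for x using that Kx unfolding Kset_def by auto
  have Ifin: "finite (I x)" for x unfolding I_def
    by (rule finite_subset[of _ "{..nat \<lceil>real x + w x\<rceil>}"]) (auto, linarith)
  have Isub: "I x \<subseteq> {a+1..2*b}" if x: "x \<in> Kx" for x
  proof
    fix n assume "n \<in> I x"
    then have n: "x \<le> n" "real n < real x + w x" unfolding I_def by auto
    have "w x \<le> real x / 2" using K_self[OF bad d] x Kx(1) unfolding w_def by auto
    then have "real n < 2 * real x" using n x1[OF x] by linarith
    then show "n \<in> {a+1..2*b}" using n Kx(3)[OF x] by auto
  qed
  have Icard: "w x \<le> real (card (I x))" for x
  proof -
    have "{x..<x + nat \<lceil>w x\<rceil>} \<subseteq> I x" unfolding I_def by auto linarith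
    then have "card {x..<x + nat \<lceil>w x\<rceil>} \<le> card (I x)" using Ifin by (intro card_mono) auto
    then have "nat \<lceil>w x\<rceil> \<le> card (I x)" by simp
    then show ?thesis by linarith
  qed
  have Idisj: "I x \<inter> I y = {}" if "x \<in> Kx" "y \<in> Kx" "x \<noteq> y" for x y
  proof -
    have gen: "I u \<inter> I v = {}" if "u \<in> Kx" "v \<in> Kx" "u < v" for u v
    proof -
      have "u \<in> Kset \<delta> \<xi> \<beta> Q" "v \<in> Kset \<delta> \<xi> \<beta> Q" using that Kx(1) by auto
      then have "w u \<le> real v - real u" using K_sep[OF bad d ab(2), of u Q v Q] that unfolding w_def by auto
      then show ?thesis unfolding I_def by auto
    qed
    show ?thesis using that gen[of x y] gen[of y x] by (cases "x < y") (auto simp: Int_commute)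
  qed
  have termb: "\<delta> / Lw x powr \<alpha> \<le> 8 * \<delta> * (\<Sum>n\<in>I x. 1 / Lw n)" if x: "x \<in> Kx" for x
  proof -
    have L0: "Lw x > 0" using Lw_pos x1[OF x] by simp
    have "Lw x powr \<alpha> * Lw x powr \<beta> = Lw x" using L0 ab by (simp add: powr_add[symmetric])
    then have e: "\<delta> / Lw x powr \<alpha> = 2 * \<delta> * w x / Lw x" unfolding w_def using L0
      by (simp add: field_simps)
    have "2 * \<delta> * w x / Lw x \<le> 2 * \<delta> * real (card (I x)) / Lw x"
      using Icard[of x] d L0 by (intro divide_right_mono mult_left_mono) auto
    also have "\<dots> = 2 * \<delta> * (\<Sum>n\<in>I x. 1 / Lw x)" by simp
    also have "\<dots> \<le> 2 * \<delta> * (\<Sum>n\<in>I x. 4 / Lw n)"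
    proof (intro mult_left_mono sum_mono)
      fix n assume n: "n \<in> I x"
      then have n1: "x \<le> n" "real n < real x + w x" unfolding I_def by auto
      have "w x \<le> real x / 2" using K_self[OF bad d] x Kx(1) unfolding w_def by auto
      then have nx: "real n \<le> 2 * real x" using n1 by linarith
      have "ln (real n + 1) \<le> ln (2 * real x + 1)" using nx x1[OF x] by simp
      also have "\<dots> \<le> ln ((real x + 1)^2)"
      proof -
        have "2 * real x + 1 \<le> (real x + 1)^2" by (simp add: power2_eq_square algebra_simps)
        then show ?thesis using x1[OF x] by (subst ln_le_cancel_iff) auto
      qed
      also have "\<dots> = 2 * ln (real x + 1)" by (simp add: ln_realpow)
      finally have "ln (real n + 1) \<le> 2 * ln (real x + 1)" .
      then have "Lw n \<le> (2 * real x) * (2 * ln (real x + 1))" unfolding Lw_def using nx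
        by (intro mult_mono) auto
      then have "Lw n \<le> 4 * Lw x" unfolding Lw_def by simp
      moreover have "Lw n > 0" using n1 x1[OF x] Lw_pos by simp
      ultimately show "1 / Lw x \<le> 4 / Lw n" using L0 by (simp add: field_simps)
    qed (use d in auto)
    also have "\<dots> = 8 * \<delta> * (\<Sum>n\<in>I x. 1 / Lw n)" by (simp add: sum_distrib_left)
    finally show ?thesis using e by simp
  qed
  have "(\<Sum>x\<in>Kx. \<delta> / Lw x powr \<alpha>) \<le> (\<Sum>x\<in>Kx. 8 * \<delta> * (\<Sum>n\<in>I x. 1 / Lw n))"
    by (intro sum_mono termb)
  also have "\<dots> = 8 * \<delta> * (\<Sum>x\<in>Kx. \<Sum>n\<in>I x. 1 / Lw n)" by (simp add: sum_distrib_left)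
  also have "(\<Sum>x\<in>Kx. \<Sum>n\<in>I x. 1 / Lw n) = (\<Sum>n\<in>(\<Union>x\<in>Kx. I x). 1 / Lw n)"
    using Kx(2) Ifin Idisj by (intro sum.UNION_disjoint[symmetric]) auto
  also have "\<dots> \<le> (\<Sum>n=a+1..2*b. 1 / Lw n)"
  proof (rule sum_mono2)
    show "finite {a+1..2*b}" by simp
    show "(\<Union>x\<in>Kx. I x) \<subseteq> {a+1..2*b}" using Isub by blast
    fix n assume "n \<in> {a+1..2*b} - (\<Union>x\<in>Kx. I x)"
    then show "0 \<le> 1 / Lw n" unfolding Lw_def by simp
  qed
  finally show ?thesis using d by simp
qed




lemma qnext_props:
  assumes d: "0 < \<delta>" "\<delta> \<le> 1 / 2^20" and q: "1 \<le> q"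
  defines "Z \<equiv> real q ^ 2 / \<delta>"
  shows "Z * ln Z < real (qnext \<delta> q)" "real (qnext \<delta> q) \<le> Z * ln Z + 1"
    "13 \<le> ln Z" "1 / \<delta> \<le> Z" "real q ^ 2 \<le> Z"
proof -
  have q1: "real q ^ 2 \<ge> 1" using q by simp
  have "1 / \<delta> \<ge> 2^20" using d by (simp add: field_simps)
  show Zd: "1 / \<delta> \<le> Z" unfolding Z_def using q1 d by (simp add: divide_right_mono)
  have Z20: "Z \<ge> 2^20" using \<open>1 / \<delta> \<ge> 2^20\<close> Zd by linarith
  have "ln ((2::real)^20) \<le> ln Z" using Z20 by (subst ln_le_cancel_iff) auto
  moreover have "ln ((2::real)^20) = real 20 * ln 2" by (rule ln_realpow)
  moreover have "ln (2::real) \<ge> 2/3" using ln2_ge_two_thirds by simp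
  ultimately show lZ: "13 \<le> ln Z" by linarith
  have ZZ: "Z * ln Z \<ge> 0" using lZ Z20 by simp
  show "Z * ln Z < real (qnext \<delta> q)" unfolding qnext_def Z_def[symmetric] using ZZ by linarith
  show "real (qnext \<delta> q) \<le> Z * ln Z + 1" unfolding qnext_def Z_def[symmetric] using ZZ by linarith
  have "real q ^ 2 / 1 \<le> real q ^ 2 / \<delta>" using d q1
    by (intro divide_left_mono) (auto simp: field_simps)
  then show "real q ^ 2 \<le> Z" unfolding Z_def by simp
qed




lemma Qv_bound:
  assumes d: "0 < \<delta>" "\<delta> \<le> 1 / 2^20" and a: "0 \<le> \<alpha>" "\<alpha> \<le> 1" and x: "1 \<le> x0" "x0 \<le> q"
  shows "Qv \<delta> \<alpha> x0 \<le> (real q ^ 2 / \<delta>) * ln (real q ^ 2 / \<delta>)"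
proof -
  define Z where "Z = real q ^ 2 / \<delta>"
  have q: "1 \<le> q" using x by simp
  note qp = qnext_props[OF d q, folded Z_def]
  have "real x0 powr (1 + \<alpha>) \<le> real x0 powr 2" using x a by (intro powr_mono) auto
  also have "\<dots> = real x0 ^ 2" using x by (simp add: powr_realpow)
  also have "\<dots> \<le> real q ^ 2" using x by (intro power_mono) auto
  finally have p1: "real x0 powr (1 + \<alpha>) \<le> real q ^ 2" .
  have qZ: "real q + 1 \<le> Z"
  proof -
    have q1: "1 \<le> real q" using q by simp
    have "real q * 1 \<le> real q * real q" using q1 by (intro mult_left_mono) auto
    moreover have "1 * 1 \<le> real q * real q" using q1 by (intro mult_mono) auto
    ultimately have "real q \<le> real q ^ 2" "1 \<le> real q ^ 2" by (auto simp: power2_eq_square)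
    then have "real q + 1 \<le> 2 * real q ^ 2" by linarith
    also have "\<dots> \<le> 2^20 * real q ^ 2" by simp
    also have "\<dots> \<le> (1/\<delta>) * real q ^ 2" using d by (intro mult_right_mono) (auto simp: field_simps)
    finally show ?thesis unfolding Z_def by simp
  qed
  have LZ: "ln (real x0 + 1) \<le> ln Z" using x qZ by (subst ln_le_cancel_iff) auto
  have p2: "ln (real x0 + 1) powr \<alpha> \<le> ln Z"
  proof (cases "ln (real x0 + 1) \<ge> 1")
    case True
    then have "ln (real x0 + 1) powr \<alpha> \<le> ln (real x0 + 1) powr 1" using a by (intro powr_mono) auto
    then show ?thesis using True LZ by simp
  next
    case False
    have "0 \<le> ln (real x0 + 1)" by simp
    then have "ln (real x0 + 1) powr \<alpha> \<le> 1" using False a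
      by (intro powr_le1) auto
    then show ?thesis using qp(3) by linarith
  qed
  have "real x0 powr (1 + \<alpha>) * ln (real x0 + 1) powr \<alpha> \<le> real q ^ 2 * ln Z"
    using p1 p2 by (intro mult_mono) auto
  then have "Qv \<delta> \<alpha> x0 \<le> real q ^ 2 * ln Z / (2 * \<delta>)" unfolding Qv_def using d
    by (intro divide_right_mono) auto
  also have "\<dots> \<le> Z * ln Z" unfolding Z_def using d qp(3) Z_def by (simp add: field_simps)
  finally show ?thesis unfolding Z_def .
qed




lemma m_exists:
  assumes d: "0 < \<delta>" "\<delta> \<le> 1 / 2^20" and a: "\<alpha>1 \<in> {0..1}" "\<alpha>2 \<in> {0..1}" and q: "1 \<le> q"
  shows "\<exists>m::nat. (\<forall>x\<in>Kset \<delta> \<xi> \<beta>1 q. lexp \<delta> \<alpha>1 x \<le> int m) \<and>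
     (\<forall>x\<in>Kset \<delta> \<xi> \<beta>2 q. lexp \<delta> \<alpha>2 x \<le> int m) \<and> (2::real)^m < real (qnext \<delta> q)"
proof -
  define M where "M = (\<lambda>x. nat (lexp \<delta> \<alpha>1 x)) ` {1..q} \<union> (\<lambda>x. nat (lexp \<delta> \<alpha>2 x)) ` {1..q}"
  define m where "m = Max M"
  have finM: "finite M" and neM: "M \<noteq> {}" unfolding M_def using q by auto
  have d4: "\<delta> \<le> 1/4" using d by simp
  have key: "(2::real) ^ nat (lexp \<delta> \<alpha> x0) < real (qnext \<delta> q)" if "\<alpha> \<in> {0..1}" "x0 \<in> {1..q}" for \<alpha> x0
  proof -
    have l0: "0 \<le> lexp \<delta> \<alpha> x0" and l1: "2 powr (lexp \<delta> \<alpha> x0) \<le> Qv \<delta> \<alpha> x0"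
      using lexp_props[OF d(1) d4, of \<alpha> x0] that by auto
    have "(2::real) ^ nat (lexp \<delta> \<alpha> x0) = 2 powr (lexp \<delta> \<alpha> x0)"
      using l0 by (simp add: powr_realpow[symmetric])
    also have "\<dots> \<le> Qv \<delta> \<alpha> x0" by (rule l1)
    also have "\<dots> \<le> (real q ^ 2 / \<delta>) * ln (real q ^ 2 / \<delta>)"
      using Qv_bound[OF d, of \<alpha> x0 q] that by auto
    also have "\<dots> < real (qnext \<delta> q)" using qnext_props(1)[OF d q] by simp
    finally show ?thesis .
  qed
  have "m \<in> M" unfolding m_def using finM neM by (rule Max_in)
  then have "(2::real)^m < real (qnext \<delta> q)" unfolding M_def using key a by auto
  moreover have "lexp \<delta> \<alpha>1 x \<le> int m" if "x \<in> Kset \<delta> \<xi> \<beta>1 q" for x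
  proof -
    have "x \<in> {1..q}" using that unfolding Kset_def by auto
    then have "nat (lexp \<delta> \<alpha>1 x) \<le> m" unfolding m_def M_def using finM M_def by (intro Max_ge) auto
    then show ?thesis by linarith
  qed
  moreover have "lexp \<delta> \<alpha>2 x \<le> int m" if "x \<in> Kset \<delta> \<xi> \<beta>2 q" for x
  proof -
    have "x \<in> {1..q}" using that unfolding Kset_def by auto
    then have "nat (lexp \<delta> \<alpha>2 x) \<le> m" unfolding m_def M_def using finM M_def by (intro Max_ge) auto
    then show ?thesis by linarith
  qed
  ultimately show ?thesis by blast
qed

lemma q_chain:
  assumes d: "0 < \<delta>" "\<delta> \<le> 1 / 2^20" and q: "1 \<le> q"
    and q1: "q1 = qnext \<delta> q" and q2: "q2 = qnext \<delta> q1"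
  shows "q \<le> q1" "q1 \<le> q2" "2 \<le> q1"
    "ln (ln (real (Suc (2 * q2)))) - ln (ln (real (q1 + 1)))  \<le> 6"
proof -
  note A = qnext_props[OF d q, folded q1]
  have Zq: "real q \<le> real q ^ 2" using q by (simp add: power2_eq_square)
  have "real q ^ 2 / \<delta> * 1 \<le> real q ^ 2 / \<delta> * ln (real q ^ 2 / \<delta>)"
    using A(3) d by (intro mult_left_mono) auto
  then have "real q ^ 2 / \<delta> \<le> real q ^ 2 / \<delta> * ln (real q ^ 2 / \<delta>)" by simp
  then have q1gt: "real q ^ 2 / \<delta> < real q1" using A(1) by linarith
  show "q \<le> q1" using q1gt A(5) Zq by linarith
  have dq1: "1 / \<delta> < real q1" using q1gt A(4) by linarith
  have "(2::real)^20 \<le> 1 / \<delta>" using d by (simp add: field_simps)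
  then have q1big: "real q1 \<ge> 2^20" using dq1 by linarith
  have "(2::real) \<le> real q1" using q1big by simp
  then show "2 \<le> q1" by simp
  then have q1p: "1 \<le> q1" by simp
  note B = qnext_props[OF d q1p, folded q2]
  define Z1 where "Z1 = real q1 ^ 2 / \<delta>"
  have "1 \<le> 1 / \<delta>" using d by (simp add: field_simps)
  then have Z1g: "Z1 \<ge> 1" using B(4) Z1_def by linarith
  have lZ1: "ln Z1 \<le> Z1" using ln_le_minus_one[of Z1] Z1g by linarith
  have lZ1p: "ln Z1 \<ge> 0" using Z1g by simp
  have "real q2 \<le> Z1 * ln Z1 + 1" using B(2) Z1_def by simp
  also have "\<dots> \<le> Z1 * Z1 + 1" using lZ1 Z1g by (simp add: mult_left_mono)
  finally have q2b: "real q2 \<le> Z1 * Z1 + 1" .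
  have "Z1 * 1 \<le> Z1 * ln Z1" using B(3) Z1g Z1_def by (intro mult_left_mono) auto
  then have "Z1 \<le> Z1 * ln Z1" by simp
  then have "Z1 < real q2" using B(1) Z1_def by simp
  moreover have "real q1 \<le> real q1 ^ 2" using q1p by (simp add: power2_eq_square)
  ultimately have "real q1 < real q2" using B(5) Z1_def by linarith
  then show "q1 \<le> q2" by simp
  have "real (Suc (2 * q2)) \<le> 5 * (Z1 * Z1)"
  proof -
    have "1 * 1 \<le> Z1 * Z1" using Z1g by (intro mult_mono) auto
    then show ?thesis using q2b by linarith
  qed
  then have f1: "ln (real (Suc (2 * q2))) \<le> ln (5 * (Z1 * Z1))" using Z1g by (subst ln_le_cancel_iff) auto
  have f2: "ln (5 * (Z1 * Z1)) = ln 5 + 2 * ln Z1" using Z1g by (simp add: ln_mult)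
  have f3: "ln Z1 = 2 * ln (real q1) + ln (1 / \<delta>)" unfolding Z1_def using d q1p
    by (simp add: ln_div ln_realpow)
  have f4: "ln (1 / \<delta>) \<le> ln (real q1)" using dq1 d q1p by (subst ln_le_cancel_iff) auto
  have f5: "ln 5 \<le> ln (real q1)" using q1big q1p by (subst ln_le_cancel_iff) auto
  have "ln (real (Suc (2 * q2))) \<le> 7 * ln (real q1)" using f1 f2 f3 f4 f5 by linarith
  also have "\<dots> \<le> 7 * ln (real (q1 + 1))" using q1p by simp
  finally have r: "ln (real (Suc (2 * q2))) \<le> 7 * ln (real (q1 + 1))" .
  have lq: "ln (real (q1 + 1)) > 0" using q1p by simp
  have lq2: "ln (real (Suc (2 * q2))) > 0" using q1p \<open>q1 \<le> q2\<close> by simp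
  have "ln (ln (real (Suc (2 * q2)))) - ln (ln (real (q1 + 1))) = ln (ln (real (Suc (2 * q2))) / ln (real (q1 + 1)))"
    using lq lq2 by (simp add: ln_div)
  also have "\<dots> \<le> ln (real (Suc (2 * q2))) / ln (real (q1 + 1)) - 1"
    using lq lq2 by (intro ln_le_minus_one) auto
  also have "\<dots> \<le> 7 - 1" using r lq by (simp add: divide_le_eq)
  finally show "ln (ln (real (Suc (2 * q2)))) - ln (ln (real (q1 + 1))) \<le> 6" by simp
qed




lemma Kset_mono: "Q \<le> Q' \<Longrightarrow> Kset \<delta> \<xi> \<beta> Q \<subseteq> Kset \<delta> \<xi> \<beta> Q'"
  unfolding Kset_def by auto

lemma Kset_fin: "finite (Kset \<delta> \<xi> \<beta> Q)"
  by (rule finite_subset[of _ "{..Q}"]) (auto simp: Kset_def)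

lemma Bset_anti: "Q \<le> Q' \<Longrightarrow> Bset \<delta> \<xi> \<alpha>1 \<beta>1 \<alpha>2 \<beta>2 Q' \<subseteq> Bset \<delta> \<xi> \<alpha>1 \<beta>1 \<alpha>2 \<beta>2 Q"
  unfolding Bset_def using Kset_mono[of Q Q'] by blast

theorem lemma5:
  fixes \<delta> \<xi> \<alpha>1 \<alpha>2 \<beta>1 \<beta>2 :: real and q q1 q2 :: nat
  assumes "0 < \<delta>" and "\<delta> \<le> 2 powr (-20)"
    and "(INF n\<in>{n::nat. 1 \<le> n}. real n * dnint (real n * \<xi>)) \<ge> \<delta>"
    and "\<alpha>1 \<in> {0..1}" and "\<alpha>2 \<in> {0..1}" and "\<beta>1 \<in> {0..1}" and "\<beta>2 \<in> {0..1}"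
    and "\<alpha>1 + \<beta>1 = 1" and "\<alpha>2 + \<beta>2 = 1" and "\<alpha>1 = max \<alpha>1 \<alpha>2"
    and "1 \<le> q"
    and "q1 = qnext \<delta> q" and "q2 = qnext \<delta> q1"
    and "measure lebesgue (Bset \<delta> \<xi> \<alpha>1 \<beta>1 \<alpha>2 \<beta>2 q1)
           \<ge> measure lebesgue (Bset \<delta> \<xi> \<alpha>1 \<beta>1 \<alpha>2 \<beta>2 q) / 2"
    and "measure lebesgue (Bset \<delta> \<xi> \<alpha>1 \<beta>1 \<alpha>2 \<beta>2 q) / 2 > 0"
  shows "measure lebesgue (Bset \<delta> \<xi> \<alpha>1 \<beta>1 \<alpha>2 \<beta>2 q2)
           \<ge> measure lebesgue (Bset \<delta> \<xi> \<alpha>1 \<beta>1 \<alpha>2 \<beta>2 q1) / 2"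
proof -
  have p20a: "(2::real) powr (-20) = inverse (2 powr 20)" by (rule powr_minus)
  have p20b: "(2::real) powr 20 = 2 ^ 20" by (rule powr_numeral) simp
  have p20: "(2::real) powr (-20) = 1 / 2^20" unfolding p20a p20b by (rule inverse_eq_divide)
  have d: "0 < \<delta>" "\<delta> \<le> 1 / 2^20" using assms(1,2) p20 by auto
  have d4: "\<delta> \<le> 1/4" "\<delta> \<le> 1/100" using d by auto
  have bad: "\<delta> \<le> real n * dnint (real n * \<xi>)" if "1 \<le> n" for n
    using bad_from_inf[OF assms(3) that] .
  note qc = q_chain[OF d assms(11,12,13)]
  obtain m :: nat where m1: "\<forall>x\<in>Kset \<delta> \<xi> \<beta>1 q. lexp \<delta> \<alpha>1 x \<le> int m"
    and m2: "\<forall>x\<in>Kset \<delta> \<xi> \<beta>2 q. lexp \<delta> \<alpha>2 x \<le> int m"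
    and m3: "(2::real)^m < real (qnext \<delta> q)"
    using m_exists[OF d assms(4,5,11)] by blast
  have m3': "(2::real)^m < real q1" using m3 assms(12) by simp
  define Bq where "Bq = Bset \<delta> \<xi> \<alpha>1 \<beta>1 \<alpha>2 \<beta>2 q"
  define Bq1 where "Bq1 = Bset \<delta> \<xi> \<alpha>1 \<beta>1 \<alpha>2 \<beta>2 q1"
  define Bq2 where "Bq2 = Bset \<delta> \<xi> \<alpha>1 \<beta>1 \<alpha>2 \<beta>2 q2"
  have lm: "Bq \<in> lmeasurable" "Bq1 \<in> lmeasurable" "Bq2 \<in> lmeasurable"
    unfolding Bq_def Bq1_def Bq2_def by (auto intro!: lmeasurable_compact Bset_compact)
  have Bq01: "Bq \<subseteq> {0..1}" unfolding Bq_def Bset_def by auto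
  have cov: "Bq \<subseteq> (\<Union>b\<in>{b. b < (2::nat)^m \<and> {real b / 2^m .. (real b + 1) / 2^m} \<subseteq> Bq}.
               {real b / 2^m .. (real b + 1) / 2^m}) \<union> (\<lambda>k. real k / 2^m) ` {..(2::nat)^m}"
    unfolding Bq_def using B_cells[OF d(1) d4(1) assms(4,5), of \<xi> \<beta>1 q m \<beta>2] m1 m2 by auto
  have sub1: "Bq1 \<subseteq> Bq" unfolding Bq_def Bq1_def using Bset_anti[OF qc(1)] .
  define K1 where "K1 = Kset \<delta> \<xi> \<beta>1 q2 - Kset \<delta> \<xi> \<beta>1 q1"
  define K2 where "K2 = Kset \<delta> \<xi> \<beta>2 q2 - Kset \<delta> \<xi> \<beta>2 q1"
  have finK: "finite K1" "finite K2" unfolding K1_def K2_def using Kset_fin by auto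
  have K1r: "q1 < x \<and> x \<le> q2" if "x \<in> K1" for x using that unfolding K1_def Kset_def by auto
  have K2r: "q1 < x \<and> x \<le> q2" if "x \<in> K2" for x using that unfolding K2_def Kset_def by auto
  have diff: "Bq1 - Bq2 \<subseteq> (\<Union>x\<in>K1. Bq - Acomp \<delta> \<alpha>1 x) \<union> (\<Union>x\<in>K2. Bq - Acomp \<delta> \<alpha>2 x)"
  proof
    fix t assume t: "t \<in> Bq1 - Bq2"
    then have tq: "t \<in> Bq" using sub1 by auto
    have t01: "t \<in> {0..1}" using t unfolding Bq1_def Bset_def by auto
    from t have "\<not> ((\<forall>x\<in>Kset \<delta> \<xi> \<beta>1 q2. t \<in> Acomp \<delta> \<alpha>1 x) \<and> (\<forall>x\<in>Kset \<delta> \<xi> \<beta>2 q2. t \<in> Acomp \<delta> \<alpha>2 x))"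
      using t01 unfolding Bq2_def Bset_def by blast
    moreover have "\<forall>x\<in>Kset \<delta> \<xi> \<beta>1 q1. t \<in> Acomp \<delta> \<alpha>1 x" "\<forall>x\<in>Kset \<delta> \<xi> \<beta>2 q1. t \<in> Acomp \<delta> \<alpha>2 x"
      using t unfolding Bq1_def Bset_def by auto
    ultimately show "t \<in> (\<Union>x\<in>K1. Bq - Acomp \<delta> \<alpha>1 x) \<union> (\<Union>x\<in>K2. Bq - Acomp \<delta> \<alpha>2 x)"
      using tq unfolding K1_def K2_def by blast
  qed
  have measD: "Bq - Acomp \<delta> \<alpha> x \<in> sets lebesgue" for \<alpha> x
    using lm(1) Acomp_closed[of \<delta> \<alpha> x] by (auto intro!: sets.Diff borel_closed)
  have rem: "measure lebesgue (Bq - Acomp \<delta> \<alpha> x) \<le> 25 * (\<delta> / Lw x powr \<alpha>) * measure lebesgue Bq"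
    if a: "\<alpha> \<in> {0..1}" and x: "q1 < x" for \<alpha> x
  proof -
    have x2: "2 \<le> x" using x qc(3) by simp
    have "(2::real)^m < real x" using m3' x by linarith
    then have "real ((2::nat)^m) < real x" by simp
    then have xm: "(2::nat)^m \<le> x" by linarith
    show ?thesis using removal[OF d(1) d4(2) _ _ x2 xm lm(1) Bq01 cov] a unfolding Lw_def by auto
  qed
  have sumK: "(\<Sum>x\<in>K. \<delta> / Lw x powr \<alpha>) \<le> 96 * \<delta>"
    if K: "K = Kset \<delta> \<xi> \<beta> q2 - Kset \<delta> \<xi> \<beta> q1" and ab: "\<alpha> \<in> {0..1}" "\<beta> \<in> {0..1}" "\<alpha> + \<beta> = 1"
    for K \<alpha> \<beta>
  proof -
    have "(\<Sum>x\<in>K. \<delta> / Lw x powr \<alpha>) \<le> 8 * \<delta> * (\<Sum>n=q1+1..2*q2. 1 / Lw n)"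
      using ab K Kset_fin by (intro K_sum[OF bad d(1), of \<alpha> \<beta> K q2 q1 q2]) (auto simp: Kset_def)
    also have "(\<Sum>n=q1+1..2*q2. 1 / Lw n) \<le> 2 * (ln (ln (real (Suc (2*q2)))) - ln (ln (real (q1+1))))"
      using qc by (intro tele_sum) auto
    also have "\<dots> \<le> 2 * 6" using qc(4) by simp
    finally show ?thesis using d by simp
  qed
  have S1: "(\<Sum>x\<in>K1. \<delta> / Lw x powr \<alpha>1) \<le> 96 * \<delta>" using sumK[OF K1_def] assms(4,6,8) by auto
  have S2: "(\<Sum>x\<in>K2. \<delta> / Lw x powr \<alpha>2) \<le> 96 * \<delta>" using sumK[OF K2_def] assms(5,7,9) by auto
  have mB: "measure lebesgue Bq \<ge> 0" by simp
  have U1: "measure lebesgue (\<Union>x\<in>K1. Bq - Acomp \<delta> \<alpha>1 x) \<le> 25 * (96 * \<delta>) * measure lebesgue Bq"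
  proof -
    have "measure lebesgue (\<Union>x\<in>K1. Bq - Acomp \<delta> \<alpha>1 x) \<le> (\<Sum>x\<in>K1. measure lebesgue (Bq - Acomp \<delta> \<alpha>1 x))"
      using finK measD by (intro measure_UNION_le) auto
    also have "\<dots> \<le> (\<Sum>x\<in>K1. 25 * (\<delta> / Lw x powr \<alpha>1) * measure lebesgue Bq)"
      using rem assms(4) K1r by (intro sum_mono) auto
    also have "\<dots> = 25 * (\<Sum>x\<in>K1. \<delta> / Lw x powr \<alpha>1) * measure lebesgue Bq"
      by (simp add: sum_distrib_left sum_distrib_right mult.assoc)
    also have "\<dots> \<le> 25 * (96 * \<delta>) * measure lebesgue Bq"
      using S1 mB by (intro mult_right_mono) auto
    finally show ?thesis .
  qed
  have U2: "measure lebesgue (\<Union>x\<in>K2. Bq - Acomp \<delta> \<alpha>2 x) \<le> 25 * (96 * \<delta>) * measure lebesgue Bq"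
  proof -
    have "measure lebesgue (\<Union>x\<in>K2. Bq - Acomp \<delta> \<alpha>2 x) \<le> (\<Sum>x\<in>K2. measure lebesgue (Bq - Acomp \<delta> \<alpha>2 x))"
      using finK measD by (intro measure_UNION_le) auto
    also have "\<dots> \<le> (\<Sum>x\<in>K2. 25 * (\<delta> / Lw x powr \<alpha>2) * measure lebesgue Bq)"
      using rem assms(5) K2r by (intro sum_mono) auto
    also have "\<dots> = 25 * (\<Sum>x\<in>K2. \<delta> / Lw x powr \<alpha>2) * measure lebesgue Bq"
      by (simp add: sum_distrib_left sum_distrib_right mult.assoc)
    also have "\<dots> \<le> 25 * (96 * \<delta>) * measure lebesgue Bq"
      using S2 mB by (intro mult_right_mono) auto
    finally show ?thesis .
  qed
  have mUU: "(\<Union>x\<in>K1. Bq - Acomp \<delta> \<alpha>1 x) \<union> (\<Union>x\<in>K2. Bq - Acomp \<delta> \<alpha>2 x) \<in> sets lebesgue"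
    using finK measD by (intro sets.Un sets.finite_UN) auto
  have "measure lebesgue (Bq1 - Bq2) \<le> measure lebesgue ((\<Union>x\<in>K1. Bq - Acomp \<delta> \<alpha>1 x) \<union> (\<Union>x\<in>K2. Bq - Acomp \<delta> \<alpha>2 x))"
  proof (rule measure_mono_fmeasurable[OF diff])
    show "Bq1 - Bq2 \<in> sets lebesgue" using lm by auto
    show "(\<Union>x\<in>K1. Bq - Acomp \<delta> \<alpha>1 x) \<union> (\<Union>x\<in>K2. Bq - Acomp \<delta> \<alpha>2 x) \<in> fmeasurable lebesgue"
      by (rule fmeasurableI2[OF lm(1)]) (use mUU in auto)
  qed
  also have "\<dots> \<le> measure lebesgue (\<Union>x\<in>K1. Bq - Acomp \<delta> \<alpha>1 x) + measure lebesgue (\<Union>x\<in>K2. Bq - Acomp \<delta> \<alpha>2 x)"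
    using finK measD by (intro measure_Un_le sets.finite_UN) auto
  finally have dB: "measure lebesgue (Bq1 - Bq2) \<le> 4800 * \<delta> * measure lebesgue Bq" using U1 U2 by simp
  have "measure lebesgue Bq1 \<le> measure lebesgue (Bq2 \<union> (Bq1 - Bq2))"
    using lm by (intro measure_mono_fmeasurable) auto
  also have "\<dots> \<le> measure lebesgue Bq2 + measure lebesgue (Bq1 - Bq2)"
    using lm by (intro measure_Un_le) auto
  finally have "measure lebesgue Bq1 \<le> measure lebesgue Bq2 + 4800 * \<delta> * measure lebesgue Bq" using dB by simp
  moreover have "measure lebesgue Bq \<le> 2 * measure lebesgue Bq1" using assms(14) Bq_def Bq1_def by simp
  moreover have "4800 * \<delta> \<le> 1/4" using d by simp
  moreover have "4800 * \<delta> * measure lebesgue Bq \<le> (1/4) * measure lebesgue Bq"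
    using mB \<open>4800 * \<delta> \<le> 1/4\<close> by (intro mult_right_mono) auto
  ultimately have "measure lebesgue Bq1 \<le> measure lebesgue Bq2 + (1/4) * (2 * measure lebesgue Bq1)"
    by linarith
  then show ?thesis unfolding Bq1_def Bq2_def by simp
qed


end
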